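(* For every even integer $T\ge 6$ and every $\sigma\in\mathfrak S_3$, the vector $\sigma c$ with $c=[\tfrac32T-1,\ \tfrac T2,\ -\tfrac T2+1,\ -\tfrac T2+1,\ -\tfrac T2+1,\ \tfrac T2]$ defines a facet of $P^T$.
   Context: For an integer $T\ge 2$, let $\Omega_T$ be the set of words $w=s_1s_2\cdots s_T$ over $\{1,2,3\}$ with $s_l\neq s_{l+1}$ for $l=1,\dots,T-1$. For $w\in\Omega_T$ and an ordered pair $ij$, $i\neq j$, let $x_{ij}(w)$ be the number of indices $1\le l\le T-1$ with $s_ls_{l+1}=ij$. Vectors of $\mathbb R^6$ are indexed in the order $[x_{12},x_{13},x_{21},x_{23},x_{31},x_{32}]$. Let $a_w=[x_{12}(w),\dots,x_{32}(w)]$ and $P^T=\mathrm{conv}\{a_w:w\in\Omega_T\}$. $\mathfrak S_3$ acts on $\mathbb R^6$ by $(\sigma c)_{ij}=c_{\sigma(i)\sigma(j)}$. A vector $c$ defines a facet of $P^T$ if $c\cdot a_w\ge0$ for all $w\in\Omega_T$ and $\{x\in P^T: c\cdot x=0\}$ is a facet of $P^T$. *)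

theory Defs
  imports "HOL-Analysis.Analysis" "HOL-Combinatorics.Permutations"
begin

definition Omega :: "nat \<Rightarrow> nat list set" where
  "Omega T = {w. length w = T \<and> set w \<subseteq> {1,2,3} \<and>
                 (\<forall>l. l + 1 < T \<longrightarrow> w ! l \<noteq> w ! (l + 1))}"

definition xcount :: "nat \<Rightarrow> nat \<Rightarrow> nat list \<Rightarrow> nat" where
  "xcount i j w = card {l. l + 1 < length w \<and> w ! l = i \<and> w ! (l + 1) = j}"

definition coord6 :: "(nat \<Rightarrow> nat \<Rightarrow> real) \<Rightarrow> real^6" where
  "coord6 f = vector [f 1 2, f 1 3, f 2 1, f 2 3, f 3 1, f 3 2]"

definition avec :: "nat list \<Rightarrow> real^6" where
  "avec w = coord6 (\<lambda>i j. real (xcount i j w))"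

definition PT :: "nat \<Rightarrow> (real^6) set" where
  "PT T = convex hull (avec ` Omega T)"

definition sigma_act :: "(nat \<Rightarrow> nat) \<Rightarrow> (nat \<Rightarrow> nat \<Rightarrow> real) \<Rightarrow> real^6" where
  "sigma_act \<sigma> c = coord6 (\<lambda>i j. c (\<sigma> i) (\<sigma> j))"

definition defines_facet :: "nat \<Rightarrow> real^6 \<Rightarrow> bool" where
  "defines_facet T c \<longleftrightarrow> (\<forall>w\<in>Omega T. c \<bullet> avec w \<ge> 0) \<and>
      {x \<in> PT T. c \<bullet> x = 0} facet_of PT T"

definition cfun :: "nat \<Rightarrow> nat \<Rightarrow> nat \<Rightarrow> real" where
  "cfun T i j =
     (if (i, j) = (1, 2) then 3/2 * real T - 1
      else if (i, j) = (1, 3) then real T / 2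
      else if (i, j) = (2, 1) then - real T / 2 + 1
      else if (i, j) = (2, 3) then - real T / 2 + 1
      else if (i, j) = (3, 1) then - real T / 2 + 1
      else if (i, j) = (3, 2) then real T / 2
      else 0)"

end

theory Submission
  imports Defs
begin


lemma xcount_Nil[simp]: "xcount i j [] = 0" by (simp add: xcount_def)

lemma xcount_Cons: "xcount i j (a # v) = (if v \<noteq> [] \<and> a = i \<and> hd v = j then 1 else 0) + xcount i j v"
proof -
  let ?S = "\<lambda>v. {l. l + 1 < length v \<and> v ! l = i \<and> v ! (l + 1) = j}"
  have eq: "?S (a # v) = (if v \<noteq> [] \<and> a = i \<and> hd v = j then {0} else {}) \<union> Suc ` ?S v"
    apply (rule set_eqI)
    apply (case_tac x)
     apply (auto simp: hd_conv_nth)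
    done
  have fin: "finite (?S v)" by (rule finite_subset[of _ "{..<length v}"]) auto
  have "card (?S (a # v)) = (if v \<noteq> [] \<and> a = i \<and> hd v = j then 1 else 0) + card (?S v)"
    unfolding eq using fin by (auto simp: card_image)
  then show ?thesis unfolding xcount_def .
qed

lemma xcount_single[simp]: "xcount i j [a] = 0" by (simp add: xcount_Cons)
lemma xcount_Cons2[simp]: "xcount i j (a # b # v) = (if a = i \<and> b = j then 1 else 0) + xcount i j (b # v)"
  by (subst xcount_Cons) simp

fun valid :: "nat list \<Rightarrow> bool" where
  "valid [] = True"
| "valid [a] = (a \<in> {1,2,3})"
| "valid (a # b # w) = (a \<in> {1,2,3} \<and> a \<noteq> b \<and> valid (b # w))"

lemma all_nat_split: "(\<forall>l::nat. P l) = (P 0 \<and> (\<forall>l. P (Suc l)))"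
  by (metis not0_implies_Suc)

lemma valid_iff: "valid w \<longleftrightarrow> set w \<subseteq> {1,2,3} \<and> (\<forall>l. l + 1 < length w \<longrightarrow> w ! l \<noteq> w ! (l + 1))"
proof (induction w rule: valid.induct)
  case (3 a b w)
  show ?case
    apply (subst all_nat_split)
    using 3 by auto
qed auto

lemma Omega_iff: "w \<in> Omega T \<longleftrightarrow> length w = T \<and> valid w"
  unfolding Omega_def valid_iff by auto

fun alt :: "nat \<Rightarrow> nat \<Rightarrow> nat \<Rightarrow> nat list" where
  "alt a b 0 = []"
| "alt a b (Suc n) = a # alt b a n"

lemma length_alt[simp]: "length (alt a b n) = n"
  by (induction n arbitrary: a b) auto

lemma valid_alt: "a \<noteq> b \<Longrightarrow> a \<in> {1,2,3} \<Longrightarrow> b \<in> {1,2,3} \<Longrightarrow> valid (alt a b n)"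
proof (induction n arbitrary: a b)
  case (Suc n)
  then show ?case by (cases n) auto
qed simp

lemma xcount_alt: "a \<noteq> b \<Longrightarrow> xcount i j (alt a b n) =
   (if i = a \<and> j = b then n div 2 else if i = b \<and> j = a then (n - 1) div 2 else 0)"
proof (induction n arbitrary: a b)
  case (Suc n)
  show ?case
  proof (cases n)
    case 0 then show ?thesis by simp
  next
    case (Suc k)
    then show ?thesis using Suc.IH[of b a] Suc.prems by (auto simp: xcount_Cons)
  qed
qed simp

lemma xcount_map: "inj \<sigma> \<Longrightarrow> xcount (\<sigma> i) (\<sigma> j) (map \<sigma> w) = xcount i j w"
  unfolding xcount_def by (intro arg_cong[where f=card] Collect_cong) (auto simp: inj_eq)

lemma valid_map: "\<sigma> permutes {1,2,3} \<Longrightarrow> valid w \<Longrightarrow> valid (map \<sigma> w)"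
proof (induction w rule: valid.induct)
  case (2 a) then show ?case using permutes_in_image[of \<sigma> "{1,2,3}" a] by simp
next
  case (3 a b w) then show ?case using permutes_in_image[of \<sigma> "{1,2,3}" a] by (simp add: permutes_inj inj_eq)
qed simp

lemma sum_xcount: "valid w \<Longrightarrow> w \<noteq> [] \<Longrightarrow>
  xcount 1 2 w + xcount 1 3 w + xcount 2 1 w + xcount 2 3 w + xcount 3 1 w + xcount 3 2 w = length w - 1"
proof (induction w rule: valid.induct)
  case (3 a b w) then show ?case by (cases "b # w" rule: valid.cases) auto
qed auto

definition hh :: "nat \<Rightarrow> nat" where "hh a = (if a = 3 then 1 else if a = 2 then 2 else 0)"
definition kk :: "nat \<Rightarrow> nat" where "kk a = (if a = 3 then 1 else if a = 1 then 2 else 0)"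

lemma key_bound: "valid w \<Longrightarrow> w \<noteq> [] \<Longrightarrow>
  2 * (2 * xcount 1 2 w + xcount 1 3 w + xcount 3 2 w) + hh (hd w) + kk (last w) \<ge> length w + 1"
proof (induction w rule: valid.induct)
  case (2 a) then show ?case by (auto simp: hh_def kk_def)
next
  case (3 a b w)
  then have IH: "2 * (2 * xcount 1 2 (b#w) + xcount 1 3 (b#w) + xcount 3 2 (b#w)) + hh b + kk (last (b#w)) \<ge> length (b#w) + 1"
    by simp
  have "a \<in> {1,2,3}" "b \<in> {1,2,3}" "a \<noteq> b" using 3 by (auto elim: valid.elims)
  then show ?case using IH by (auto simp: hh_def kk_def)
qed auto

lemma vec6: "(vector [a,b,c,d,e,f] :: ('x::zero)^6) $ 1 = a"
  "(vector [a,b,c,d,e,f] :: ('x::zero)^6) $ 2 = b"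
  "(vector [a,b,c,d,e,f] :: ('x::zero)^6) $ 3 = c"
  "(vector [a,b,c,d,e,f] :: ('x::zero)^6) $ 4 = d"
  "(vector [a,b,c,d,e,f] :: ('x::zero)^6) $ 5 = e"
  "(vector [a,b,c,d,e,f] :: ('x::zero)^6) $ 6 = f"
  unfolding vector_def by simp_all
lemma exhaust_6: fixes x :: 6 shows "x = 1 \<or> x = 2 \<or> x = 3 \<or> x = 4 \<or> x = 5 \<or> x = 6"
proof (induct x)
  case (of_int z)
  then have "z = 0 \<or> z = 1 \<or> z = 2 \<or> z = 3 \<or> z = 4 \<or> z = 5" by fastforce
  then show ?case by auto
qed
lemma UNIV_6: "UNIV = {1,2,3,4,5,6::6}" using exhaust_6 by auto
lemma sum_6: "sum f (UNIV::6 set) = f 1 + f 2 + f 3 + f 4 + f 5 + f 6"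
  unfolding UNIV_6 by (simp add: ac_simps)
lemma inner_coord6: "coord6 f \<bullet> coord6 g = f 1 2 * g 1 2 + f 1 3 * g 1 3 + f 2 1 * g 2 1 + f 2 3 * g 2 3 + f 3 1 * g 3 1 + f 3 2 * g 3 2"
  unfolding coord6_def inner_vec_def sum_6 by (simp add: vec6)

lemma inner_avec: "coord6 f \<bullet> avec w = f 1 2 * real (xcount 1 2 w) + f 1 3 * real (xcount 1 3 w)
   + f 2 1 * real (xcount 2 1 w) + f 2 3 * real (xcount 2 3 w) + f 3 1 * real (xcount 3 1 w) + f 3 2 * real (xcount 3 2 w)"
  unfolding avec_def inner_coord6 by simp

lemma perm3_cases:
  assumes "\<sigma> permutes {1,2,3::nat}"
  shows "(\<sigma> 1 = 1 \<and> \<sigma> 2 = 2 \<and> \<sigma> 3 = 3) \<or> (\<sigma> 1 = 1 \<and> \<sigma> 2 = 3 \<and> \<sigma> 3 = 2) \<or>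
         (\<sigma> 1 = 2 \<and> \<sigma> 2 = 1 \<and> \<sigma> 3 = 3) \<or> (\<sigma> 1 = 2 \<and> \<sigma> 2 = 3 \<and> \<sigma> 3 = 1) \<or>
         (\<sigma> 1 = 3 \<and> \<sigma> 2 = 1 \<and> \<sigma> 3 = 2) \<or> (\<sigma> 1 = 3 \<and> \<sigma> 2 = 2 \<and> \<sigma> 3 = 1)"
proof -
  have "\<sigma> 1 \<in> {1,2,3}" "\<sigma> 2 \<in> {1,2,3}" "\<sigma> 3 \<in> {1,2,3}"
    using permutes_in_image[OF assms] by auto
  moreover have "\<sigma> 1 \<noteq> \<sigma> 2" "\<sigma> 1 \<noteq> \<sigma> 3" "\<sigma> 2 \<noteq> \<sigma> 3"
    using permutes_inj[OF assms] by (auto simp: inj_eq)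
  ultimately show ?thesis by auto
qed

lemma key_sigma:
  assumes "\<sigma> permutes {1,2,3::nat}"
  shows "sigma_act \<sigma> c \<bullet> avec w = coord6 c \<bullet> avec (map \<sigma> w)"
proof -
  have inj: "inj \<sigma>" using permutes_inj[OF assms] .
  have X: "\<And>i j. xcount (\<sigma> i) (\<sigma> j) (map \<sigma> w) = xcount i j w" using xcount_map[OF inj] .
  note X1 = X[of 1 2] X[of 1 3] X[of 2 1] X[of 2 3] X[of 3 1] X[of 3 2]
  show ?thesis
    unfolding sigma_act_def inner_avec
    using perm3_cases[OF assms] X1 by (elim disjE conjE) (simp_all add: algebra_simps)
qed

lemma notin_span_func:
  assumes "\<And>u. u \<in> S \<Longrightarrow> g \<bullet> u = 0" "g \<bullet> v \<noteq> 0"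
  shows "v \<notin> span S"
proof
  assume "v \<in> span S"
  moreover have "span S \<subseteq> {x. g \<bullet> x = 0}"
    by (rule span_minimal) (use assms(1) subspace_hyperplane in auto)
  ultimately show False using assms(2) by auto
qed

lemma aff_dim_ge4:
  fixes p0 p1 p2 p3 p4 g1 g2 g3 g4 :: "'a::euclidean_space"
  assumes X: "{p0,p1,p2,p3,p4} \<subseteq> X"
  and h1: "g1 \<bullet> (p1-p0) \<noteq> 0"
  and h2: "g2 \<bullet> (p1-p0) = 0" "g2 \<bullet> (p2-p0) \<noteq> 0"
  and h3: "g3 \<bullet> (p1-p0) = 0" "g3 \<bullet> (p2-p0) = 0" "g3 \<bullet> (p3-p0) \<noteq> 0"
  and h4: "g4 \<bullet> (p1-p0) = 0" "g4 \<bullet> (p2-p0) = 0" "g4 \<bullet> (p3-p0) = 0" "g4 \<bullet> (p4-p0) \<noteq> 0"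
  shows "aff_dim X \<ge> 4"
proof -
  define v1 where "v1 = p1 - p0"
  define v2 where "v2 = p2 - p0"
  define v3 where "v3 = p3 - p0"
  define v4 where "v4 = p4 - p0"
  have n1: "v1 \<notin> span {}" using h1 unfolding v1_def by auto
  have n2: "v2 \<notin> span {v1}" by (rule notin_span_func[of _ g2]) (use h2 v1_def v2_def in auto)
  have n3: "v3 \<notin> span {v2, v1}" by (rule notin_span_func[of _ g3]) (use h3 v1_def v2_def v3_def in auto)
  have n4: "v4 \<notin> span {v3, v2, v1}" by (rule notin_span_func[of _ g4]) (use h4 v1_def v2_def v3_def v4_def in auto)
  have ind: "independent {v4, v3, v2, v1}"
    by (intro independent_insertI n1 n2 n3 n4 independent_empty)
  have d: "v1 \<notin> {}" "v2 \<notin> {v1}" "v3 \<notin> {v2,v1}" "v4 \<notin> {v3,v2,v1}"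
    using n2 span_base[of v2 "{v1}"] n3 span_base[of v3 "{v2,v1}"] n4 span_base[of v4 "{v3,v2,v1}"] by auto
  have c4: "card {v4, v3, v2, v1} = 4" using d by simp
  have img: "(\<lambda>x. -p0 + x) ` {p4,p3,p2,p1} = {v4,v3,v2,v1}" unfolding v1_def v2_def v3_def v4_def by simp
  have p0n: "p0 \<notin> {p4,p3,p2,p1}" using h1 h2(2) h3(3) h4(4) by auto
  have "\<not> affine_dependent (insert p0 {p4,p3,p2,p1})"
    unfolding affine_dependent_iff_dependent[OF p0n] img using ind .
  moreover have "card (insert p0 {p4,p3,p2,p1}) = 5"
  proof -
    have "card {p4,p3,p2,p1} = card ((\<lambda>x. -p0 + x) ` {p4,p3,p2,p1})"
      by (rule card_image[symmetric]) (simp add: inj_on_def)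
    then have "card {p4,p3,p2,p1} = 4" using img c4 by simp
    then show ?thesis using p0n by simp
  qed
  ultimately have "aff_dim (insert p0 {p4,p3,p2,p1}) = 4"
    using aff_dim_affine_independent by fastforce
  moreover have "insert p0 {p4,p3,p2,p1} \<subseteq> X" using X by auto
  ultimately show ?thesis using aff_dim_subset by metis
qed



lemma hd_alt: "0 < n \<Longrightarrow> hd (alt a b n) = a" by (cases n) auto
lemma alt_ne: "0 < n \<Longrightarrow> alt a b n \<noteq> []" by (cases n) auto

lemma valid_Cons_alt: "0 < n \<Longrightarrow> a \<noteq> b \<Longrightarrow> a \<in> {1,2,3} \<Longrightarrow> b \<in> {1,2,3} \<Longrightarrow> c \<in> {1,2,3} \<Longrightarrow> b \<noteq> c
  \<Longrightarrow> valid (a # alt b c n)"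
  using valid_alt[of b c n] by (cases n) auto

lemma valid_id:
  assumes "even T" "T \<ge> 2" "w \<in> Omega T"
  shows "coord6 (cfun T) \<bullet> avec w \<ge> 0"
proof -
  obtain m where m: "T = 2 * m" using assms(1) by blast
  have v: "valid w" and len: "length w = T" using assms(3) by (auto simp: Omega_iff)
  have ne: "w \<noteq> []" using len assms(2) by auto
  have kb: "2 * (2 * xcount 1 2 w + xcount 1 3 w + xcount 3 2 w) + hh (hd w) + kk (last w) \<ge> length w + 1"
    using key_bound[OF v ne] .
  have "hh (hd w) \<le> 2" "kk (last w) \<le> 2" by (auto simp: hh_def kk_def)
  then have Q: "2 * xcount 1 2 w + xcount 1 3 w + xcount 3 2 w + 1 \<ge> m"
    using kb len m by presburger
  have S: "xcount 1 2 w + xcount 1 3 w + xcount 2 1 w + xcount 2 3 w + xcount 3 1 w + xcount 3 2 w + 1 = 2 * m"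
    using sum_xcount[OF v ne] len m assms(2) by linarith
  define a where "a = real (xcount 1 2 w)"
  define b where "b = real (xcount 1 3 w)"
  define c where "c = real (xcount 2 1 w)"
  define d where "d = real (xcount 2 3 w)"
  define e where "e = real (xcount 3 1 w)"
  define f where "f = real (xcount 3 2 w)"
  have Qr: "2 * a + b + f + 1 \<ge> real m" using Q unfolding a_def b_def f_def by linarith
  have Sr: "a + b + c + d + e + f = 2 * real m - 1" using S unfolding a_def b_def c_def d_def e_def f_def
    by (metis (mono_tags, lifting) add_diff_cancel_right' of_nat_1 of_nat_add of_nat_mult of_nat_numeral)
  have m1: "real m \<ge> 1" using m assms(2) by simp
  have "coord6 (cfun T) \<bullet> avec w = (3 * real m - 1) * a + real m * b + (1 - real m) * (c + d + e) + real m * f"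
    unfolding inner_avec a_def b_def c_def d_def e_def f_def by (simp add: cfun_def m algebra_simps)
  also have "\<dots> = (2 * real m - 1) * (2 * a + b + f + 1 - real m) + (1 - real m) * (a + b + c + d + e + f - (2 * real m - 1))"
    by (simp add: algebra_simps)
  also have "\<dots> = (2 * real m - 1) * (2 * a + b + f + 1 - real m)" using Sr by simp
  also have "\<dots> \<ge> 0" using Qr m1 by simp
  finally show ?thesis .
qed

definition ind :: "nat \<Rightarrow> nat \<Rightarrow> nat \<Rightarrow> nat \<Rightarrow> real" where
  "ind k l = (\<lambda>i j. if i = k \<and> j = l then 1 else 0)"

lemma inner_ind: "k \<in> {1,2,3} \<Longrightarrow> l \<in> {1,2,3} \<Longrightarrow> k \<noteq> l \<Longrightarrow> coord6 (ind k l) \<bullet> avec w = real (xcount k l w)"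
  unfolding inner_avec ind_def by auto

lemma sum_avec: "valid w \<Longrightarrow> length w = T \<Longrightarrow> T \<ge> 1 \<Longrightarrow> coord6 (\<lambda>i j. 1) \<bullet> avec w = real T - 1"
  unfolding inner_avec using sum_xcount[of w]
  by (metis (no_types, lifting) One_nat_def le_add_diff_inverse2 length_0_conv mult_1 not_one_le_zero
      of_nat_1 of_nat_add add_diff_cancel_right')

lemma coord6_ne0: "coord6 (\<lambda>i j. 1) \<noteq> (0 :: real^6)"
proof
  assume "coord6 (\<lambda>i j. 1) = (0 :: real^6)"
  then have "coord6 (\<lambda>i j. 1) $ 1 = (0 :: real^6) $ 1" by simp
  then show False unfolding coord6_def by (simp add: vec6)
qed

theorem proposition10:
  fixes T :: nat and \<sigma> :: "nat \<Rightarrow> nat"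
  assumes "even T" and "T \<ge> 6" and "\<sigma> permutes {1, 2, 3}"
  shows "defines_facet T (sigma_act \<sigma> (cfun T))"
proof -
  obtain m where m: "T = 2 * m" using assms(1) by blast
  have m3: "m \<ge> 3" using m assms(2) by simp
  define \<tau> where "\<tau> = inv \<sigma>"
  have tau: "\<tau> permutes {1,2,3}" unfolding \<tau>_def using permutes_inv[OF assms(3)] .
  have st: "\<And>w. map \<sigma> (map \<tau> w) = w"
    unfolding \<tau>_def by (simp add: comp_def permutes_inverses(1)[OF assms(3)])
  define c where "c = sigma_act \<sigma> (cfun T)"
  define S where "S = avec ` Omega T"
  have P: "PT T = convex hull S" unfolding PT_def S_def ..
  have OmS: "\<And>w. w \<in> Omega T \<Longrightarrow> map \<sigma> w \<in> Omega T"
    using valid_map[OF assms(3)] by (simp add: Omega_iff)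
  have OmT: "\<And>w. w \<in> Omega T \<Longrightarrow> map \<tau> w \<in> Omega T"
    using valid_map[OF tau] by (simp add: Omega_iff)
  have tr: "\<And>g w. sigma_act \<sigma> g \<bullet> avec (map \<tau> w) = coord6 g \<bullet> avec w"
    using key_sigma[OF assms(3)] st by simp
  have valid_c: "\<forall>w\<in>Omega T. c \<bullet> avec w \<ge> 0"
  proof
    fix w assume "w \<in> Omega T"
    then show "c \<bullet> avec w \<ge> 0"
      unfolding c_def key_sigma[OF assms(3)] using valid_id[OF assms(1) _ OmS] assms(2) by simp
  qed
  have PT_ge: "\<And>x. x \<in> PT T \<Longrightarrow> c \<bullet> x \<ge> 0"
  proof -
    have "PT T \<subseteq> {x. c \<bullet> x \<ge> 0}"
      unfolding P S_def by (rule hull_minimal) (use valid_c convex_halfspace_ge[of 0 c] in auto)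
    then show "\<And>x. x \<in> PT T \<Longrightarrow> c \<bullet> x \<ge> 0" by auto
  qed
  define F where "F = {x \<in> PT T. c \<bullet> x = 0}"
  have F_eq: "F = PT T \<inter> {x. c \<bullet> x = 0}" unfolding F_def by auto
  have convP: "convex (PT T)" unfolding PT_def by (rule convex_convex_hull)
  have face: "F face_of PT T"
    unfolding F_eq by (rule face_of_Int_supporting_hyperplane_ge) (use convP PT_ge in auto)
  define w0 where "w0 = alt 3 1 (2*m)"
  define w1 where "w1 = 2 # alt 1 3 (2*m-1)"
  define w2 where "w2 = 2 # alt 3 1 (2*m-1)"
  define w3 where "w3 = alt 2 3 (2*m)"
  define w4 where "w4 = 2 # 3 # 1 # 2 # alt 3 1 (2*m-4)"
  define wp where "wp = alt 1 2 (2*m)"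
  have pos: "0 < 2*m-1" "0 < 2*m-4" using m3 by auto
  have inO: "w0 \<in> Omega T" "w1 \<in> Omega T" "w2 \<in> Omega T" "w3 \<in> Omega T" "w4 \<in> Omega T" "wp \<in> Omega T"
    unfolding Omega_iff w0_def w1_def w2_def w3_def w4_def wp_def m
    using m3 pos by (auto intro!: valid_alt valid_Cons_alt)
  have dv: "(2*m) div 2 = m" "(2*m - 1) div 2 = m - 1" "(2*m - 1 - 1) div 2 = m - 1"
     "(2*m - 4) div 2 = m - 2" "(2*m - 4 - 1) div 2 = m - 3" using m3 by auto
  note xs = xcount_alt xcount_Cons hd_alt alt_ne pos dv
  have x0: "xcount 1 2 w0 = 0" "xcount 1 3 w0 = m - 1" "xcount 2 1 w0 = 0" "xcount 2 3 w0 = 0" "xcount 3 1 w0 = m" "xcount 3 2 w0 = 0"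
    unfolding w0_def using m3 by (simp_all add: xs)
  have x1: "xcount 1 2 w1 = 0" "xcount 1 3 w1 = m - 1" "xcount 2 1 w1 = 1" "xcount 2 3 w1 = 0" "xcount 3 1 w1 = m - 1" "xcount 3 2 w1 = 0"
    unfolding w1_def using m3 by (simp_all add: xs)
  have x2: "xcount 1 2 w2 = 0" "xcount 1 3 w2 = m - 1" "xcount 2 1 w2 = 0" "xcount 2 3 w2 = 1" "xcount 3 1 w2 = m - 1" "xcount 3 2 w2 = 0"
    unfolding w2_def using m3 by (simp_all add: xs)
  have x3: "xcount 1 2 w3 = 0" "xcount 1 3 w3 = 0" "xcount 2 1 w3 = 0" "xcount 2 3 w3 = m" "xcount 3 1 w3 = 0" "xcount 3 2 w3 = m - 1"
    unfolding w3_def using m3 by (simp_all add: xs)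
  have x4: "xcount 1 2 w4 = 1" "xcount 1 3 w4 = m - 3" "xcount 2 1 w4 = 0" "xcount 2 3 w4 = 2" "xcount 3 1 w4 = m - 1" "xcount 3 2 w4 = 0"
    unfolding w4_def using m3 by (simp_all add: xs)
  have xp: "xcount 1 2 wp = m" "xcount 1 3 wp = 0" "xcount 2 1 wp = m - 1" "xcount 2 3 wp = 0" "xcount 3 1 wp = 0" "xcount 3 2 wp = 0"
    unfolding wp_def using m3 by (simp_all add: xs)
  define p where "p = (\<lambda>w. avec (map \<tau> w))"
  have pP: "\<And>w. w \<in> Omega T \<Longrightarrow> p w \<in> PT T"
    unfolding p_def P S_def by (rule hull_inc) (use OmT in auto)
  have cp: "\<And>w. c \<bullet> p w = coord6 (cfun T) \<bullet> avec w" unfolding c_def p_def tr ..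
  have gp: "\<And>k l w. k \<in> {1,2,3} \<Longrightarrow> l \<in> {1,2,3} \<Longrightarrow> k \<noteq> l \<Longrightarrow>
      sigma_act \<sigma> (ind k l) \<bullet> p w = real (xcount k l w)"
    unfolding p_def tr by (rule inner_ind)
  have rm: "real (m - 1) = real m - 1" "real (m - Suc 0) = real m - 1" "real (m - 3) = real m - 3" using m3 by (simp_all add: of_nat_diff)
  have z: "coord6 (cfun T) \<bullet> avec w0 = 0" "coord6 (cfun T) \<bullet> avec w1 = 0" "coord6 (cfun T) \<bullet> avec w2 = 0"
     "coord6 (cfun T) \<bullet> avec w3 = 0" "coord6 (cfun T) \<bullet> avec w4 = 0"
    unfolding inner_avec x0 x1 x2 x3 x4 by (simp_all add: cfun_def m rm algebra_simps)
  have zp: "coord6 (cfun T) \<bullet> avec wp > 0"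
  proof -
    have "real m \<ge> 3" using m3 by simp
    moreover have "0 \<le> real m * (real m * 2)" by simp
    ultimately have "1 < real m + real m * (real m * 2)" by linarith
    then show ?thesis unfolding inner_avec xp by (simp add: cfun_def m rm algebra_simps)
  qed
  have inF: "p w0 \<in> F" "p w1 \<in> F" "p w2 \<in> F" "p w3 \<in> F" "p w4 \<in> F"
    unfolding F_def using pP inO cp z by auto
  have notF: "p wp \<notin> F" unfolding F_def using cp zp by auto
  have FnP: "F \<noteq> PT T" using notF pP inO(6) by auto
  have Fne: "F \<noteq> {}" using inF by auto
  have lt: "aff_dim F < aff_dim (PT T)" by (rule face_of_aff_dim_lt[OF convP face FnP])
  have hyp: "PT T \<subseteq> {x. coord6 (\<lambda>i j. 1) \<bullet> x = real T - 1}"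
    unfolding P S_def
  proof (rule hull_minimal)
    show "avec ` Omega T \<subseteq> {x. coord6 (\<lambda>i j. 1) \<bullet> x = real T - 1}"
      using sum_avec assms(2) by (auto simp: Omega_iff)
  qed (rule convex_hyperplane)
  have le5: "aff_dim (PT T) \<le> 5"
    using aff_dim_subset[OF hyp] aff_dim_hyperplane[OF coord6_ne0] by simp
  have ge4: "aff_dim F \<ge> 4"
  proof (rule aff_dim_ge4[of "p w0" "p w1" "p w2" "p w3" "p w4" F
        "sigma_act \<sigma> (ind 2 1)" "sigma_act \<sigma> (ind 2 3)" "sigma_act \<sigma> (ind 3 2)" "sigma_act \<sigma> (ind 1 2)"])
    show "{p w0, p w1, p w2, p w3, p w4} \<subseteq> F" using inF by auto
  qed (use m3 in \<open>simp_all add: inner_diff_right gp x0 x1 x2 x3 x4 rm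
         x0[simplified] x1[simplified] x2[simplified] x3[simplified] x4[simplified]\<close>)
  have "aff_dim F = aff_dim (PT T) - 1" using lt le5 ge4 by linarith
  then have "F facet_of PT T" unfolding facet_of_def using face Fne by auto
  then show ?thesis unfolding defines_facet_def F_def c_def[symmetric] using valid_c by auto
qed
end
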